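(* Let $\Sigma,\Gamma$ be finite alphabets, each with at least two letters. Let $w,u\in\Sigma^{\mathbb{N}}$ be infinite words with $w = pu$ for some finite word $p\in\Sigma^*$. Then $\mathrm{ACE}_{\mathcal{I}}(w) = \mathrm{ACE}_{\mathcal{I}}(u)$.
   Context: $\mathrm{Fact}_n(w)$ is the set of length-$n$ factors of $w$. For a nonempty word $v$ and integer $p\ge0$, $v^{p/|v|}$ is the prefix of length $p$ of $vvv\cdots$. For a nonempty finite word $u$, $\mathrm{E}(u) = \sup\{ r \in \mathbb{Q} : u = v^r \text{ for some nonempty } v\}$. For an infinite word $w$, $\mathrm{ACE}(w) = \limsup_{n\to\infty}\sup\{\mathrm{E}(u) : u\in\mathrm{Fact}_n(w)\}$. $\mathcal{I}$ is the set of injective morphisms $\Sigma^*\to\Gamma^*$ and $\mathrm{ACE}_{\mathcal{I}}(w) = \sup\{\mathrm{ACE}(h(w)) : h\in\mathcal{I}\}$. *)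

theory Defs
  imports Complex_Main "HOL-Library.Extended_Real"
begin

definition frac_pow :: "'a list \<Rightarrow> nat \<Rightarrow> 'a list" where
  "frac_pow v p = map (\<lambda>i. v ! (i mod length v)) [0..<p]"

definition is_pow :: "'a list \<Rightarrow> 'a list \<Rightarrow> rat \<Rightarrow> bool" where
  "is_pow u v r \<longleftrightarrow> v \<noteq> [] \<and> (\<exists>p::nat. r * of_nat (length v) = of_nat p \<and> u = frac_pow v p)"

definition E :: "'a list \<Rightarrow> ereal" where
  "E u = Sup {ereal (real_of_rat r) | r. \<exists>v. is_pow u v r}"

definition Fact :: "nat \<Rightarrow> (nat \<Rightarrow> 'a) \<Rightarrow> 'a list set" where
  "Fact n w = {map (\<lambda>i. w (k + i)) [0..<n] | k. True}"

definition ACE :: "(nat \<Rightarrow> 'a) \<Rightarrow> ereal" where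
  "ACE w = limsup (\<lambda>n. Sup (E ` Fact n w))"

definition morph :: "('a \<Rightarrow> 'b list) \<Rightarrow> 'a list \<Rightarrow> 'b list" where
  "morph h xs = concat (map h xs)"

definition inj_morph :: "('a \<Rightarrow> 'b list) \<Rightarrow> bool" where
  "inj_morph h \<longleftrightarrow> inj (morph h)"

text \<open>Image of an infinite word under a nonerasing morphism (injective morphisms are nonerasing):
  the i-th letter of h(w) is the i-th letter of h(w_0 ... w_i).\<close>
definition morph_inf :: "('a \<Rightarrow> 'b list) \<Rightarrow> (nat \<Rightarrow> 'a) \<Rightarrow> (nat \<Rightarrow> 'b)" where
  "morph_inf h w = (\<lambda>i. morph h (map w [0..<Suc i]) ! i)"

definition ACE_I :: "'b itself \<Rightarrow> (nat \<Rightarrow> 'a) \<Rightarrow> ereal" where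
  "ACE_I (_::'b itself) w = Sup {ACE (morph_inf h w) | h :: 'a \<Rightarrow> 'b list. inj_morph h}"

definition app_inf :: "'a list \<Rightarrow> (nat \<Rightarrow> 'a) \<Rightarrow> (nat \<Rightarrow> 'a)" where
  "app_inf p u = (\<lambda>i. if i < length p then p ! i else u (i - length p))"

end

theory Submission
  imports Defs
begin

lemma length_frac_pow[simp]: "length (frac_pow v p) = p"
  by (simp add: frac_pow_def)

lemma E_nonneg: "0 \<le> E x"
proof -
  have "is_pow x (if x = [] then [undefined] else x) (if x = [] then 0 else 1)"
  proof (cases "x = []")
    case True then show ?thesis by (simp add: is_pow_def frac_pow_def)
  next
    case False
    have "frac_pow x (length x) = x"
      by (rule nth_equalityI) (auto simp: frac_pow_def)
    with False show ?thesis unfolding is_pow_def by (intro conjI exI[of _ "length x"]) auto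
  qed
  hence "ereal (real_of_rat (if x = [] then 0 else 1)) \<le> E x"
    unfolding E_def by (intro Sup_upper) blast
  thus ?thesis using order_trans[of "ereal 0" "ereal 1" "E x"] by (cases "x = []") (auto simp: zero_ereal_def)
qed

lemma frac_pow_Cons:
  assumes "a # y = frac_pow v (Suc m)" "v \<noteq> []"
  shows "y = frac_pow (rotate1 v) m"
proof -
  have "length y = m" using arg_cong[OF assms(1), of length] by simp
  moreover have "y ! i = frac_pow (rotate1 v) m ! i" if "i < m" for i
  proof -
    have "y ! i = (a # y) ! Suc i" by simp
    also have "\<dots> = v ! (Suc i mod length v)" using assms(1) that
      by (simp add: frac_pow_def del: upt_Suc)
    also have "\<dots> = rotate1 v ! (i mod length v)"
      using assms(2) by (simp add: nth_rotate1 mod_Suc_eq)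
    finally show ?thesis using that by (simp add: frac_pow_def)
  qed
  ultimately show ?thesis by (intro nth_equalityI) auto
qed

lemma E_Cons:
  assumes "length y = m" "m \<ge> 1"
  shows "E (a # y) \<le> ereal ((real m + 1) / real m) * E y"
  unfolding E_def[of "a # y"]
proof (rule Sup_least)
  fix z assume "z \<in> {ereal (real_of_rat r) |r. \<exists>v. is_pow (a # y) v r}"
  then obtain r v p where z: "z = ereal (real_of_rat r)" and v: "v \<noteq> []"
    and rp: "r * of_nat (length v) = of_nat p" and eq: "a # y = frac_pow v p"
    unfolding is_pow_def by blast
  have p: "p = Suc m" using arg_cong[OF eq, of length] assms by simp
  define q where "q = length v"
  have q: "q > 0" using v q_def by simp
  have r: "r = of_nat (Suc m) / of_nat q" using rp p q q_def by (simp add: field_simps)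
  have "is_pow y (rotate1 v) (of_nat m / of_nat q)"
    unfolding is_pow_def using v q q_def frac_pow_Cons[OF eq[unfolded p] v]
    by (intro conjI exI[of _ m]) auto
  hence "ereal (real_of_rat (of_nat m / of_nat q)) \<le> E y"
    unfolding E_def by (intro Sup_upper) blast
  hence le: "ereal (m / q) \<le> E y" by (simp add: of_rat_divide)
  have "real_of_rat r = real (Suc m) / real q" using r by (simp add: of_rat_divide of_rat_add)
  hence "z = ereal ((real m + 1) / real m) * ereal (real m / real q)"
    using z assms q by (simp add: field_simps)
  also have "\<dots> \<le> ereal ((real m + 1) / real m) * E y"
    by (rule ereal_mult_left_mono[OF le]) simp
  finally show "z \<le> ereal ((real m + 1) / real m) * E y" .
qed

lemma Fact_length: "x \<in> Fact n w \<Longrightarrow> length x = n"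
  by (auto simp: Fact_def)

lemma Sq_nonneg: "0 \<le> Sup (E ` Fact n w)"
proof -
  have "map (\<lambda>i. w (0 + i)) [0..<n] \<in> Fact n w" unfolding Fact_def by blast
  thus ?thesis by (meson E_nonneg SUP_upper2)
qed

lemma Fact_shift1:
  assumes "\<And>i. w (Suc i) = u i"
  shows "Fact n u \<subseteq> Fact n w"
proof
  fix x assume "x \<in> Fact n u"
  then obtain k where "x = map (\<lambda>i. u (k + i)) [0..<n]" unfolding Fact_def by blast
  hence "x = map (\<lambda>i. w (Suc k + i)) [0..<n]" using assms by simp
  thus "x \<in> Fact n w" unfolding Fact_def by blast
qed

lemma Fact_shift2:
  assumes "\<And>i. w (Suc i) = u i" "w 0 = a"
  shows "Fact (Suc m) w \<subseteq> Fact (Suc m) u \<union> (Cons a) ` Fact m u"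
proof
  fix x assume "x \<in> Fact (Suc m) w"
  then obtain k where x: "x = map (\<lambda>i. w (k + i)) [0..<Suc m]" unfolding Fact_def by blast
  show "x \<in> Fact (Suc m) u \<union> (Cons a) ` Fact m u"
  proof (cases k)
    case 0
    have "x = a # map (\<lambda>i. u (0 + i)) [0..<m]"
      unfolding x 0 using assms
      by (simp add: upt_conv_Cons map_Suc_upt[symmetric] del: upt_Suc)
    moreover have "map (\<lambda>i. u (0 + i)) [0..<m] \<in> Fact m u" unfolding Fact_def by blast
    ultimately show ?thesis by blast
  next
    case (Suc k')
    hence "x = map (\<lambda>i. u (k' + i)) [0..<Suc m]" using x assms by simp
    thus ?thesis unfolding Fact_def by blast
  qed
qed

lemma Sq_step:
  assumes "\<And>i. w (Suc i) = u i" "w 0 = a" "m \<ge> 1"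
  shows "Sup (E ` Fact (Suc m) w) \<le>
    max (Sup (E ` Fact (Suc m) u)) (ereal ((real m + 1) / real m) * Sup (E ` Fact m u))"
proof (rule SUP_least)
  fix x assume "x \<in> Fact (Suc m) w"
  with Fact_shift2[OF assms(1,2)] have "x \<in> Fact (Suc m) u \<or> x \<in> (Cons a) ` Fact m u" by blast
  thus "E x \<le> max (Sup (E ` Fact (Suc m) u)) (ereal ((real m + 1) / real m) * Sup (E ` Fact m u))"
  proof
    assume "x \<in> Fact (Suc m) u"
    hence "E x \<le> Sup (E ` Fact (Suc m) u)" by (rule SUP_upper)
    thus ?thesis by (rule max.coboundedI1)
  next
    assume "x \<in> (Cons a) ` Fact m u"
    then obtain y where y: "y \<in> Fact m u" "x = a # y" by blast
    have "E x \<le> ereal ((real m + 1) / real m) * E y"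
      using E_Cons[OF Fact_length[OF y(1)] assms(3)] y(2) by simp
    also have "\<dots> \<le> ereal ((real m + 1) / real m) * Sup (E ` Fact m u)"
      by (rule ereal_mult_left_mono) (auto intro: SUP_upper y(1))
    finally show ?thesis by (rule max.coboundedI2)
  qed
qed

lemma ACE_cons_le:
  assumes "\<And>i. w (Suc i) = u i" "w 0 = a"
  shows "ACE w \<le> ACE u"
proof -
  have A0: "0 \<le> ACE u" unfolding ACE_def by (intro le_Limsup) (auto simp: Sq_nonneg)
  have key: "ACE w \<le> ereal (c*b)" if c: "c > 1" and b: "ACE u < ereal b" for c b
  proof -
    have b0: "b > 0" using A0 b by (metis ereal_less(2) order_le_less_trans)
    from Limsup_lessD[OF b[unfolded ACE_def]] obtain N where
      N: "\<forall>n\<ge>N. Sup (E ` Fact n u) < ereal b" by (auto simp: eventually_sequentially)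
    obtain K :: nat where K: "real K > c/(c-1)" using reals_Archimedean2 by blast
    have "eventually (\<lambda>n. Sup (E ` Fact n w) \<le> ereal (c*b)) sequentially"
      unfolding eventually_sequentially
    proof (intro exI[of _ "Suc (N + K + 1)"] allI impI)
      fix n assume n: "Suc (N+K+1) \<le> n"
      then obtain m where m: "n = Suc m" "m \<ge> N" "m \<ge> 1" "m \<ge> K" by (cases n) auto
      have "c/(c-1) < real m" using K m by linarith
      hence "c < real m * (c-1)" using c by (simp add: divide_less_eq)
      hence cm: "(real m + 1)/real m \<le> c" using m(3) c by (simp add: pos_divide_le_eq algebra_simps)
      have "Sup (E`Fact n w) \<le> max (Sup (E`Fact (Suc m) u)) (ereal ((real m+1)/real m) * Sup (E`Fact m u))"
        using Sq_step[OF assms m(3)] m(1) by simp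
      also have "\<dots> \<le> ereal (c*b)"
      proof (rule max.boundedI)
        have "Sup (E`Fact (Suc m) u) < ereal b" using N m by simp
        also have "ereal b \<le> ereal (c*b)" using c b0 by simp
        finally show "Sup (E`Fact (Suc m) u) \<le> ereal (c*b)" by simp
      next
        have "Sup (E`Fact m u) \<le> ereal b" using N m less_imp_le by auto
        hence "ereal ((real m+1)/real m) * Sup (E`Fact m u) \<le> ereal ((real m+1)/real m) * ereal b"
          by (rule ereal_mult_left_mono) simp
        also have "\<dots> = ereal ((real m+1)/real m * b)" by simp
        also have "\<dots> \<le> ereal (c*b)" using mult_right_mono[OF cm, of b] b0 by simp
        finally show "ereal ((real m+1)/real m) * Sup (E`Fact m u) \<le> ereal (c*b)" .
      qed
      finally show "Sup (E`Fact n w) \<le> ereal (c*b)" .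
    qed
    thus ?thesis unfolding ACE_def by (rule Limsup_bounded)
  qed
  show ?thesis
  proof (cases "ACE u")
    case PInf then show ?thesis by simp
  next
    case MInf with A0 show ?thesis by simp
  next
    case (real a)
    have a0: "a \<ge> 0" using A0 real by simp
    have fin: "ACE w \<le> ereal (2*(a+1))" using key[of 2 "a+1"] real by simp
    show ?thesis
    proof (rule ccontr)
      assume "\<not> ACE w \<le> ACE u"
      then have lt: "ereal a < ACE w" using real by simp
      then obtain z where z: "ACE w = ereal z" using fin by (cases "ACE w") auto
      define d where "d = z - a"
      have d: "d > 0" using lt z d_def by simp
      define c where "c = (a + d/2)/(a + d/4)"
      have c1: "c > 1" using a0 d by (simp add: c_def less_divide_eq)
      have cc: "c * (a + d/4) = a + d/2" using a0 d by (simp add: c_def)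
      have "ACE w \<le> ereal (c*(a+d/4))" using key[OF c1] real d by simp
      then show False using cc z d_def d by (simp add: field_simps)
    qed
  qed
qed

lemma ACE_cons:
  assumes "\<And>i. w (Suc i) = u i"
  shows "ACE w = ACE u"
proof (rule antisym)
  show "ACE w \<le> ACE u" by (rule ACE_cons_le[of w u "w 0"]) (use assms in auto)
  show "ACE u \<le> ACE w" unfolding ACE_def
    by (intro Limsup_mono always_eventually allI SUP_subset_mono Fact_shift1[of w u, OF assms] order_refl)
qed

lemma ACE_app_inf: "ACE (app_inf p u) = ACE u"
proof (induction p)
  case Nil
  have "app_inf [] u = u" by (simp add: app_inf_def)
  then show ?case by simp
next
  case (Cons a p)
  have "\<And>i. app_inf (a # p) u (Suc i) = app_inf p u i" by (simp add: app_inf_def)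
  then show ?case using ACE_cons Cons by metis
qed

lemma morph_append[simp]: "morph h (xs @ ys) = morph h xs @ morph h ys"
  by (simp add: morph_def)

lemma morph_len:
  assumes "\<forall>x. h x \<noteq> []" shows "length (morph h xs) \<ge> length xs"
proof (induction xs)
  case Nil then show ?case by simp
next
  case (Cons a xs)
  have "length (h a) \<ge> 1" using assms by (simp add: Suc_le_eq)
  then show ?case using Cons by (simp add: morph_def)
qed

lemma morph_inf_nth:
  assumes ne: "\<forall>x. h x \<noteq> []" and m: "Suc i \<le> m"
  shows "morph h (map w [0..<m]) ! i = morph_inf h w i"
proof -
  have "[0..<m] = [0..<Suc i] @ [Suc i..<m]" using m upt_add_eq_append[of 0 "Suc i" "m - Suc i"] by simp
  hence "morph h (map w [0..<m]) = morph h (map w [0..<Suc i]) @ morph h (map w [Suc i..<m])"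
    by (simp del: upt_Suc)
  moreover have "length (morph h (map w [0..<Suc i])) > i"
    using morph_len[OF ne, of "map w [0..<Suc i]"] by simp
  ultimately show ?thesis by (simp add: nth_append morph_inf_def del: upt_Suc)
qed

lemma morph_inf_app:
  assumes ne: "\<forall>x. h x \<noteq> []"
  shows "morph_inf h (app_inf p u) = app_inf (morph h p) (morph_inf h u)"
proof
  fix i
  have L: "map (app_inf p u) [0..<length p + Suc i] = p @ map u [0..<Suc i]"
    by (rule nth_equalityI) (auto simp: app_inf_def nth_append simp del: upt_Suc)
  have "morph_inf h (app_inf p u) i = morph h (map (app_inf p u) [0..<length p + Suc i]) ! i"
    using morph_inf_nth[OF ne, of i "length p + Suc i"] by simp
  also have "\<dots> = (morph h p @ morph h (map u [0..<Suc i])) ! i" unfolding L by simp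
  also have "\<dots> = app_inf (morph h p) (morph_inf h u) i"
  proof (cases "i < length (morph h p)")
    case True then show ?thesis by (simp add: nth_append app_inf_def del: upt_Suc)
  next
    case False
    have "morph h (map u [0..<Suc i]) ! (i - length (morph h p)) = morph_inf h u (i - length (morph h p))"
      by (rule morph_inf_nth[OF ne]) simp
    with False show ?thesis by (simp add: nth_append app_inf_def del: upt_Suc)
  qed
  finally show "morph_inf h (app_inf p u) i = app_inf (morph h p) (morph_inf h u) i" .
qed

lemma inj_morph_ne: "inj_morph h \<Longrightarrow> \<forall>x. h x \<noteq> []"
proof (intro allI notI)
  fix x assume i: "inj_morph h" and hx: "h x = []"
  have "morph h [x] = morph h []" using hx by (simp add: morph_def)
  with i have "[x] = []" unfolding inj_morph_def by (meson injD)
  thus False by simp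
qed

theorem theorem20:
  fixes w u :: "nat \<Rightarrow> 'a::finite" and p :: "'a list"
  assumes "card (UNIV :: 'a set) \<ge> 2" and "card (UNIV :: 'b::finite set) \<ge> 2"
    and "w = app_inf p u"
  shows "ACE_I TYPE('b) w = ACE_I TYPE('b) u"
proof -
  have "{ACE (morph_inf h w) | h :: 'a \<Rightarrow> 'b list. inj_morph h} =
        {ACE (morph_inf h u) | h :: 'a \<Rightarrow> 'b list. inj_morph h}"
  proof -
    have "ACE (morph_inf h w) = ACE (morph_inf h u)" if "inj_morph h" for h :: "'a \<Rightarrow> 'b list"
      using assms(3) morph_inf_app[OF inj_morph_ne[OF that]] ACE_app_inf by metis
    thus ?thesis by (intro Collect_cong) metis
  qed
  thus ?thesis unfolding ACE_I_def by simp
qed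

end
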